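(* Let $H$ be a subgroup of Thompson's group $F$ such that: (1) for every $r\in\mathbb{N}$, $1^r0\sim_H 10$; (2) for every $s\in\mathbb{N}$, $0^s1\sim_H 01$; (3) $01\sim_H 10\sim_H 010\sim_H 011$. Then $\mathrm{Cl}(H)$ contains the derived subgroup $[F,F]$.
   Context: Thompson's group $F$ is the group of all piecewise linear homeomorphisms of $[0,1]$ with finitely many breakpoints, all breakpoints dyadic fractions and all slopes integer powers of $2$. For a finite binary word $u$, let $[u]$ denote the dyadic interval of numbers whose binary expansion begins with $u$. An element $h\in F$ has the pair of branches $u\rightarrow v$ if $h(.u\alpha)=.v\alpha$ for every infinite binary word $\alpha$ (i.e. $h$ maps $[u]$ linearly onto $[v]$). For $H\le F$ and finite binary words $u,v$, write $u\sim_H v$ if some $h\in H$ has the pair of branches $u\rightarrow v$ (an equivalence relation). The closure $\mathrm{Cl}(H)$ is the subgroup of all $f\in F$ for which there is a finite subdivision of $[0,1]$ into intervals such that on each interval $f$ coincides with some element of $H$. Words like $1^r0$ denote $r$ copies of $1$ followed by $0$. *)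

theory Defs
  imports Complex_Main "HOL-Algebra.Generated_Groups"
begin

definition dyadic :: "real \<Rightarrow> bool" where
  "dyadic x \<longleftrightarrow> (\<exists>(k::int) (n::nat). x = real_of_int k / 2 ^ n)"

definition pl_dyadic :: "(real \<Rightarrow> real) \<Rightarrow> bool" where
  "pl_dyadic f \<longleftrightarrow> (\<exists>bs :: real list.
      length bs \<ge> 2 \<and> sorted_wrt (<) bs \<and> hd bs = 0 \<and> last bs = 1 \<and>
      (\<forall>b\<in>set bs. dyadic b) \<and>
      (\<forall>i. Suc i < length bs \<longrightarrow>
         (\<exists>(k::int) (c::real). \<forall>x\<in>{bs ! i .. bs ! Suc i}. f x = 2 powr (real_of_int k) * x + c)))"

text \<open>Elements of F are represented as functions on the reals that are
  piecewise linear homeomorphisms of [0,1] as above, and the identity outside [0,1]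
  (so that F is a group under composition).\<close>
definition thompsonF :: "(real \<Rightarrow> real) set" where
  "thompsonF = {f. (\<forall>x. x \<notin> {0..1} \<longrightarrow> f x = x) \<and>
                   bij_betw f {0..1} {0..1} \<and> continuous_on {0..1} f \<and>
                   continuous_on {0..1} (inv_into {0..1} f) \<and> pl_dyadic f}"

definition thompsonG :: "(real \<Rightarrow> real) monoid" where
  "thompsonG = \<lparr>carrier = thompsonF, mult = (\<circ>), one = id\<rparr>"

text \<open>Finite binary words are bool lists (True = digit 1); infinite binary words
  are functions nat \<Rightarrow> bool.\<close>
definition word_val :: "(nat \<Rightarrow> bool) \<Rightarrow> real" where
  "word_val \<alpha> = (\<Sum>n. (if \<alpha> n then 1 else 0) / 2 ^ Suc n)"

definition prepend :: "bool list \<Rightarrow> (nat \<Rightarrow> bool) \<Rightarrow> (nat \<Rightarrow> bool)" where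
  "prepend u \<alpha> = (\<lambda>n. if n < length u then u ! n else \<alpha> (n - length u))"

definition has_branches :: "(real \<Rightarrow> real) \<Rightarrow> bool list \<Rightarrow> bool list \<Rightarrow> bool" where
  "has_branches h u v \<longleftrightarrow> (\<forall>\<alpha>. h (word_val (prepend u \<alpha>)) = word_val (prepend v \<alpha>))"

definition sim :: "(real \<Rightarrow> real) set \<Rightarrow> bool list \<Rightarrow> bool list \<Rightarrow> bool" where
  "sim H u v \<longleftrightarrow> (\<exists>h\<in>H. has_branches h u v)"

definition Cl :: "(real \<Rightarrow> real) set \<Rightarrow> (real \<Rightarrow> real) set" where
  "Cl H = {f \<in> thompsonF. \<exists>as :: real list.
      length as \<ge> 2 \<and> sorted_wrt (<) as \<and> hd as = 0 \<and> last as = 1 \<and>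
      (\<forall>i. Suc i < length as \<longrightarrow>
         (\<exists>h\<in>H. \<forall>x\<in>{as ! i .. as ! Suc i}. f x = h x))}"

end

theory Submission
  imports Defs
begin


lemma dyadic_of_int[simp]: "dyadic (real_of_int k)"
  unfolding dyadic_def by (rule exI[of _ k], rule exI[of _ 0]) simp

lemma dyadic_0[simp]: "dyadic 0" and dyadic_1[simp]: "dyadic 1"
  using dyadic_of_int[of 0] dyadic_of_int[of 1] by simp_all

lemma dyadic_add: assumes "dyadic x" "dyadic y" shows "dyadic (x + y)"
proof -
  obtain k n l m where x: "x = real_of_int k / 2^n" and y: "y = real_of_int l / 2^m"
    using assms unfolding dyadic_def by blast
  have "x + y = real_of_int (k * 2^m + l * 2^n) / 2^(n+m)"
    by (simp add: x y field_simps power_add)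
  then show ?thesis unfolding dyadic_def by blast
qed

lemma dyadic_mult: assumes "dyadic x" "dyadic y" shows "dyadic (x * y)"
proof -
  obtain k n l m where x: "x = real_of_int k / 2^n" and y: "y = real_of_int l / 2^m"
    using assms unfolding dyadic_def by blast
  have "x * y = real_of_int (k * l) / 2^(n+m)"
    by (simp add: x y field_simps power_add)
  then show ?thesis unfolding dyadic_def by blast
qed

lemma dyadic_uminus: assumes "dyadic x" shows "dyadic (- x)"
proof -
  obtain k n where x: "x = real_of_int k / 2^n"
    using assms unfolding dyadic_def by blast
  have "- x = real_of_int (- k) / 2^n" by (simp add: x)
  then show ?thesis unfolding dyadic_def by blast
qed

lemma dyadic_diff: "dyadic x \<Longrightarrow> dyadic y \<Longrightarrow> dyadic (x - y)"
  using dyadic_add[of x "- y"] dyadic_uminus[of y] by simp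

lemma dyadic_pow2: "dyadic (2 powr real_of_int k)"
proof (cases "k \<ge> 0")
  case True
  then have "2 powr real_of_int k = real_of_int (2 ^ nat k) / 2^0"
    by (simp add: powr_realpow[symmetric])
  then show ?thesis unfolding dyadic_def by blast
next
  case False
  then have "2 powr real_of_int k = real_of_int 1 / 2^(nat (-k))"
    by (simp add: powr_minus_divide powr_realpow[symmetric])
  then show ?thesis unfolding dyadic_def by blast
qed

lemma dyadic_div_pow: "dyadic x \<Longrightarrow> dyadic (x / 2^n)"
proof -
  assume "dyadic x"
  then obtain k m where x: "x = real_of_int k / 2^m" unfolding dyadic_def by blast
  have "x / 2^n = real_of_int k / 2^(m+n)" by (simp add: x power_add)
  then show ?thesis unfolding dyadic_def by blast
qed

lemma dyadic_scale: assumes "dyadic x" shows "\<exists>n. \<forall>m\<ge>n. \<exists>j::int. x * 2^m = j"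
proof -
  obtain k n where x: "x = real_of_int k / 2^n"
    using assms unfolding dyadic_def by blast
  { fix m assume "m \<ge> n"
    have e: "(2::real)^m = 2^n * 2^(m-n)" using \<open>m \<ge> n\<close> by (simp add: power_add[symmetric])
    have "x * 2^m = real_of_int (k * 2^(m-n))"
      by (simp add: x e)
    then have "\<exists>j::int. x * 2^m = j" by blast }
  then show ?thesis by blast
qed



definition affp :: "(real \<Rightarrow> real) \<Rightarrow> real \<Rightarrow> real \<Rightarrow> bool" where
  "affp f x y \<longleftrightarrow> (\<exists>(k::int) (c::real). \<forall>z\<in>{x..y}. f z = 2 powr real_of_int k * z + c)"

definition pls :: "(real \<Rightarrow> real) \<Rightarrow> real set \<Rightarrow> bool" where
  "pls f B \<longleftrightarrow> finite B \<and> B \<subseteq> {0..1} \<and> 0 \<in> B \<and> 1 \<in> B \<and> (\<forall>b\<in>B. dyadic b) \<and>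
     (\<forall>x y. 0 \<le> x \<longrightarrow> x < y \<longrightarrow> y \<le> 1 \<longrightarrow> (\<forall>b\<in>B. b \<le> x \<or> y \<le> b) \<longrightarrow> affp f x y)"

lemma affp_sub: "affp f a b \<Longrightarrow> a \<le> x \<Longrightarrow> y \<le> b \<Longrightarrow> affp f x y"
  unfolding affp_def by force

lemma list_find:
  fixes bs :: "real list"
  shows "sorted_wrt (<) bs \<Longrightarrow> bs \<noteq> [] \<Longrightarrow> hd bs \<le> x \<Longrightarrow> x < last bs \<Longrightarrow>
    \<exists>i. Suc i < length bs \<and> bs ! i \<le> x \<and> x < bs ! Suc i"
proof (induction bs)
  case Nil then show ?case by simp
next
  case (Cons a rest)
  show ?case
  proof (cases "rest = []")
    case True then show ?thesis using Cons.prems by simp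
  next
    case False
    show ?thesis
    proof (cases "x < hd rest")
      case True
      then show ?thesis using Cons.prems False by (auto simp: hd_conv_nth intro!: exI[of _ 0])
    next
      case F2: False
      have "\<exists>i. Suc i < length rest \<and> rest ! i \<le> x \<and> x < rest ! Suc i"
        using Cons.IH Cons.prems False F2 by auto
      then obtain i where "Suc i < length rest \<and> rest ! i \<le> x \<and> x < rest ! Suc i" by blast
      then show ?thesis by (intro exI[of _ "Suc i"]) simp
    qed
  qed
qed

lemma pl_dyadic_pls: assumes "pl_dyadic f" shows "\<exists>B. pls f B"
proof -
  obtain bs :: "real list" where L: "length bs \<ge> 2" and S: "sorted_wrt (<) bs" and H: "hd bs = 0"
    and La: "last bs = 1" and D: "\<forall>b\<in>set bs. dyadic b"
    and P: "\<forall>i. Suc i < length bs \<longrightarrow>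
         (\<exists>(k::int) (c::real). \<forall>x\<in>{bs ! i .. bs ! Suc i}. f x = 2 powr (real_of_int k) * x + c)"
    using assms unfolding pl_dyadic_def by blast
  have ne: "bs \<noteq> []" using L by auto
  have h0: "bs ! 0 = 0" using H ne by (simp add: hd_conv_nth)
  have l1: "bs ! (length bs - 1) = 1" using La ne by (simp add: last_conv_nth)
  have mono: "bs ! i \<le> bs ! j" if "i \<le> j" "j < length bs" for i j
    using sorted_wrt_nth_less[OF S, of i j] that by (cases "i = j") auto
  have sub: "set bs \<subseteq> {0..1}"
  proof
    fix b assume "b \<in> set bs"
    then obtain j where j: "j < length bs" "b = bs ! j" by (auto simp: in_set_conv_nth)
    then show "b \<in> {0..1}" using mono[of 0 j] mono[of j "length bs - 1"] h0 l1 by auto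
  qed
  have "pls f (set bs)"
    unfolding pls_def
  proof (intro conjI allI impI)
    show "finite (set bs)" by simp
    show "set bs \<subseteq> {0..1}" by (rule sub)
    show "0 \<in> set bs" using h0 ne by (metis hd_in_set H)
    show "1 \<in> set bs" using ne La by (metis last_in_set)
    show "\<forall>b\<in>set bs. dyadic b" by (rule D)
    fix x y :: real assume x0: "0 \<le> x" and xy: "x < y" and y1: "y \<le> 1"
      and nb: "\<forall>b\<in>set bs. b \<le> x \<or> y \<le> b"
    obtain i where i: "Suc i < length bs" "bs ! i \<le> x" "x < bs ! Suc i"
      using list_find[OF S ne, of x] H La x0 xy y1 by auto
    have "bs ! Suc i \<in> set bs" using i by simp
    then have "y \<le> bs ! Suc i" using nb i by force
    moreover have "affp f (bs ! i) (bs ! Suc i)" using P i unfolding affp_def by blast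
    ultimately show "affp f x y" using i affp_sub by blast
  qed
  then show ?thesis by blast
qed

lemma pls_pl_dyadic: assumes "pls f B" shows "pl_dyadic f"
proof -
  have fin: "finite B" and sub: "B \<subseteq> {0..1}" and b0: "0 \<in> B" and b1: "1 \<in> B"
    and D: "\<forall>b\<in>B. dyadic b"
    and A: "\<And>x y. 0 \<le> x \<Longrightarrow> x < y \<Longrightarrow> y \<le> 1 \<Longrightarrow> (\<forall>b\<in>B. b \<le> x \<or> y \<le> b) \<Longrightarrow> affp f x y"
    using assms unfolding pls_def by auto
  define bs where "bs = sorted_list_of_set B"
  have S: "sorted_wrt (<) bs" unfolding bs_def by simp
  have sb: "set bs = B" unfolding bs_def using fin by simp
  have "card B \<ge> 2"
  proof -
    have "card {0::real,1} \<le> card B" using fin b0 b1 by (intro card_mono) auto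
    then show ?thesis by simp
  qed
  then have L: "length bs \<ge> 2" unfolding bs_def by simp
  then have ne: "bs \<noteq> []" by auto
  have mono: "bs ! i \<le> bs ! j" if "i \<le> j" "j < length bs" for i j
    using sorted_wrt_nth_less[OF S, of i j] that by (cases "i = j") auto
  have H: "hd bs = 0"
  proof -
    have "hd bs \<in> B" using ne sb by (metis hd_in_set)
    then have "hd bs \<ge> 0" using sub by auto
    moreover obtain j where "j < length bs" "bs ! j = 0" using b0 sb by (metis in_set_conv_nth)
    then have "hd bs \<le> 0" using mono[of 0 j] ne by (simp add: hd_conv_nth)
    ultimately show ?thesis by simp
  qed
  have La: "last bs = 1"
  proof -
    have "last bs \<in> B" using ne sb by (metis last_in_set)
    then have "last bs \<le> 1" using sub by auto
    moreover obtain j where "j < length bs" "bs ! j = 1" using b1 sb by (metis in_set_conv_nth)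
    then have "last bs \<ge> 1" using mono[of j "length bs - 1"] ne by (simp add: last_conv_nth)
    ultimately show ?thesis by simp
  qed
  have P: "\<exists>(k::int) (c::real). \<forall>x\<in>{bs ! i .. bs ! Suc i}. f x = 2 powr (real_of_int k) * x + c"
    if i: "Suc i < length bs" for i
  proof -
    have lt: "bs ! i < bs ! Suc i" using sorted_wrt_nth_less[OF S, of i "Suc i"] i by simp
    have inB: "bs ! i \<in> B" "bs ! Suc i \<in> B" using i sb by auto
    have nb: "\<forall>b\<in>B. b \<le> bs ! i \<or> bs ! Suc i \<le> b"
    proof
      fix b assume "b \<in> B"
      then obtain j where j: "j < length bs" "b = bs ! j" using sb by (metis in_set_conv_nth)
      show "b \<le> bs ! i \<or> bs ! Suc i \<le> b"
      proof (cases "j \<le> i")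
        case True then show ?thesis using mono[of j i] i j by auto
      next
        case False then show ?thesis using mono[of "Suc i" j] i j by auto
      qed
    qed
    have "affp f (bs ! i) (bs ! Suc i)" using A[OF _ lt _ nb] inB sub by force
    then show ?thesis unfolding affp_def by blast
  qed
  show ?thesis unfolding pl_dyadic_def
    using L S H La D sb P by (intro exI[of _ bs]) auto
qed

lemma pl_dyadic_iff: "pl_dyadic f \<longleftrightarrow> (\<exists>B. pls f B)"
  using pl_dyadic_pls pls_pl_dyadic by blast



lemma F_out: "f \<in> thompsonF \<Longrightarrow> x \<notin> {0..1} \<Longrightarrow> f x = x"
  unfolding thompsonF_def by simp
lemma F_bij: "f \<in> thompsonF \<Longrightarrow> bij_betw f {0..1} {0..1}"
  unfolding thompsonF_def by simp
lemma F_cont: "f \<in> thompsonF \<Longrightarrow> continuous_on {0..1} f"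
  unfolding thompsonF_def by simp
lemma F_icont: "f \<in> thompsonF \<Longrightarrow> continuous_on {0..1} (inv_into {0..1} f)"
  unfolding thompsonF_def by simp
lemma F_pl: "f \<in> thompsonF \<Longrightarrow> pl_dyadic f"
  unfolding thompsonF_def by simp
lemma F_pls: "f \<in> thompsonF \<Longrightarrow> \<exists>B. pls f B"
  using F_pl pl_dyadic_pls by metis
lemma F_range: "f \<in> thompsonF \<Longrightarrow> x \<in> {0..1} \<Longrightarrow> f x \<in> {0..1}"
  by (rule bij_betw_apply[OF F_bij])

lemma F_strict: assumes f: "f \<in> thompsonF" and x0: "0 \<le> x" and xy: "x < y" and y1: "y \<le> 1"
  shows "f x < f y"
proof -
  obtain B where B: "pls f B" using F_pls[OF f] by blast
  have fin: "finite B" and sub: "B \<subseteq> {0..1}" and b0: "0 \<in> B" and b1: "1 \<in> B"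
    and A: "\<And>x y. 0 \<le> x \<Longrightarrow> x < y \<Longrightarrow> y \<le> 1 \<Longrightarrow> (\<forall>b\<in>B. b \<le> x \<or> y \<le> b) \<Longrightarrow> affp f x y"
    using B unfolding pls_def by auto
  have cont: "continuous_on {0..1} f" using F_cont[OF f] .
  have inj: "inj_on f {0..1}" by (rule bij_betw_imp_inj_on[OF F_bij[OF f]])
  define \<delta> where "\<delta> = Min (B - {0})"
  have fin': "finite (B - {0})" and ne: "B - {0} \<noteq> {}" using fin b1 by auto
  have dB: "\<delta> \<in> B - {0}" unfolding \<delta>_def using Min_in[OF fin' ne] .
  have dpos: "\<delta> > 0" and d1: "\<delta> \<le> 1" using dB sub by force+
  have dmin: "\<And>b. b \<in> B \<Longrightarrow> b \<noteq> 0 \<Longrightarrow> \<delta> \<le> b" unfolding \<delta>_def using fin' by auto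
  have "affp f 0 \<delta>"
  proof (rule A)
    show "\<forall>b\<in>B. b \<le> 0 \<or> \<delta> \<le> b" using dmin by (metis order_refl)
  qed (use dpos d1 in auto)
  then obtain k c where kc: "\<forall>z\<in>{0..\<delta>}. f z = 2 powr real_of_int k * z + c" unfolding affp_def by blast
  have f0d: "f 0 < f \<delta>" using kc dpos by auto
  have f01: "f 0 < f 1"
  proof (cases "\<delta> = 1")
    case True then show ?thesis using f0d by simp
  next
    case False
    then have "\<delta> < 1" using d1 by simp
    from continuous_inj_imp_mono[OF dpos this cont inj] f0d show ?thesis by auto
  qed
  have mid: "f 0 < f z \<and> f z < f 1" if "0 < z" "z < 1" for z
    using continuous_inj_imp_mono[OF that cont inj] f01 by auto
  show ?thesis
  proof (cases "x = 0")
    case True then show ?thesis using mid[of y] f01 xy y1 by (cases "y = 1") auto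
  next
    case False
    then have xp: "0 < x" using x0 by simp
    show ?thesis
    proof (cases "y = 1")
      case True then show ?thesis using mid[of x] xp xy by auto
    next
      case False
      then have y1': "y < 1" using y1 by simp
      have "continuous_on {x..1} f" using x0 by (intro continuous_on_subset[OF cont]) auto
      moreover have "inj_on f {x..1}" using x0 by (intro inj_on_subset[OF inj]) auto
      ultimately have "(f x < f y \<and> f y < f 1) \<or> (f 1 < f y \<and> f y < f x)"
        by (rule continuous_inj_imp_mono[OF xy y1'])
      then show ?thesis using mid[of y] xp xy y1' by auto
    qed
  qed
qed

lemma F_mono: "f \<in> thompsonF \<Longrightarrow> 0 \<le> x \<Longrightarrow> x \<le> y \<Longrightarrow> y \<le> 1 \<Longrightarrow> f x \<le> f y"
  using F_strict[of f x y] by (cases "x = y") auto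

lemma F_less_iff: "f \<in> thompsonF \<Longrightarrow> x \<in> {0..1} \<Longrightarrow> y \<in> {0..1} \<Longrightarrow> f x < f y \<longleftrightarrow> x < y"
  using F_strict[of f x y] F_strict[of f y x] by (cases "x = y") (auto, force)

lemma F_le_iff: "f \<in> thompsonF \<Longrightarrow> x \<in> {0..1} \<Longrightarrow> y \<in> {0..1} \<Longrightarrow> f x \<le> f y \<longleftrightarrow> x \<le> y"
  using F_less_iff[of f y x] by auto

lemma F_0: assumes f: "f \<in> thompsonF" shows "f 0 = 0"
proof -
  have "f ` {0..1} = {0..1}" by (rule bij_betw_imp_surj_on[OF F_bij[OF f]])
  then have "0 \<in> f ` {0..1}" by simp
  then obtain z where z: "z \<in> {0..1}" "f z = 0" by auto
  have "f 0 \<ge> 0" using F_range[OF f, of 0] by auto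
  then have "\<not> 0 < z" using F_strict[OF f, of 0 z] z by auto
  then show ?thesis using z by auto
qed

lemma F_1: assumes f: "f \<in> thompsonF" shows "f 1 = 1"
proof -
  have "f ` {0..1} = {0..1}" by (rule bij_betw_imp_surj_on[OF F_bij[OF f]])
  then have "1 \<in> f ` {0..1}" by simp
  then obtain z where z: "z \<in> {0..1}" "f z = 1" by auto
  have "f 1 \<le> 1" using F_range[OF f, of 1] by auto
  then have "\<not> z < 1" using F_strict[OF f, of z 1] z by auto
  then show ?thesis using z by auto
qed

lemma grid_exists: "finite (B::real set) \<Longrightarrow> \<forall>b\<in>B. dyadic b \<Longrightarrow>
   \<forall>\<^sub>F m in sequentially. \<forall>b\<in>B. \<exists>j::int. b * 2^m = j"
proof -
  assume fin: "finite B" and D: "\<forall>b\<in>B. dyadic b"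
  have "\<forall>b\<in>B. \<forall>\<^sub>F m in sequentially. \<exists>j::int. b * 2^m = j"
  proof
    fix b assume "b \<in> B"
    then obtain n where "\<forall>m\<ge>n. \<exists>j::int. b * 2^m = j" using dyadic_scale D by blast
    then show "\<forall>\<^sub>F m in sequentially. \<exists>j::int. b * 2^m = j"
      unfolding eventually_sequentially by auto
  qed
  then show ?thesis by (rule eventually_ball_finite[OF fin])
qed

lemma cell_aff:
  assumes B: "pls f B" and G: "\<forall>b\<in>B. \<exists>j::int. b * 2^N = j" and j: "j < (2::nat)^N"
  shows "affp f (real j / 2^N) (real (Suc j) / 2^N)"
proof -
  have A: "\<And>x y. 0 \<le> x \<Longrightarrow> x < y \<Longrightarrow> y \<le> 1 \<Longrightarrow> (\<forall>b\<in>B. b \<le> x \<or> y \<le> b) \<Longrightarrow> affp f x y"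
    using B unfolding pls_def by auto
  show ?thesis
  proof (rule A)
    show "0 \<le> real j / 2 ^ N" by simp
    show "real j / 2 ^ N < real (Suc j) / 2 ^ N" by (simp add: divide_strict_right_mono)
    have "real (Suc j) \<le> 2^N" using j by (metis Suc_leI of_nat_le_iff of_nat_numeral of_nat_power)
    then show "real (Suc j) / 2 ^ N \<le> 1" by simp
    show "\<forall>b\<in>B. b \<le> real j / 2 ^ N \<or> real (Suc j) / 2 ^ N \<le> b"
    proof
      fix b assume "b \<in> B"
      then obtain i :: int where i: "b * 2^N = i" using G by blast
      have bi: "b = i / 2^N" using i by (simp add: field_simps)
      have "i \<le> int j \<or> int (Suc j) \<le> i" by linarith
      then consider "real_of_int i \<le> real j" | "real (Suc j) \<le> real_of_int i"
        by (metis of_int_le_iff of_int_of_nat_eq)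
      then show "b \<le> real j / 2 ^ N \<or> real (Suc j) / 2 ^ N \<le> b"
      proof cases
        case 1 then show ?thesis unfolding bi by (intro disjI1 divide_right_mono) auto
      next
        case 2 then show ?thesis unfolding bi by (intro disjI2 divide_right_mono) auto
      qed
    qed
  qed
qed

lemma grid_dyadic:
  assumes f: "f \<in> thompsonF" and B: "pls f B" and G: "\<forall>b\<in>B. \<exists>j::int. b * 2^N = j"
  shows "j \<le> (2::nat)^N \<Longrightarrow> dyadic (f (real j / 2^N))"
proof (induction j)
  case 0 then show ?case using F_0[OF f] by simp
next
  case (Suc j)
  then have j: "j < 2^N" by simp
  obtain k c where kc: "\<forall>z\<in>{real j / 2^N .. real (Suc j) / 2^N}. f z = 2 powr real_of_int k * z + c"
    using cell_aff[OF B G j] unfolding affp_def by blast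
  have e1: "f (real j / 2^N) = 2 powr real_of_int k * (real j / 2^N) + c"
    using kc by (simp add: divide_right_mono)
  have e2: "f (real (Suc j) / 2^N) = 2 powr real_of_int k * (real (Suc j) / 2^N) + c"
    using kc by (simp add: divide_right_mono)
  have "f (real (Suc j) / 2^N) = f (real j / 2^N) + 2 powr real_of_int k * 1 / 2^N"
    using e1 e2 by (simp add: field_simps)
  moreover have "dyadic (2 powr real_of_int k * 1 / 2^N)"
    using dyadic_div_pow[OF dyadic_pow2] by simp
  ultimately show ?case using Suc dyadic_add by simp
qed

lemma F_dyadic: assumes f: "f \<in> thompsonF" and x: "x \<in> {0..1}" and d: "dyadic x"
  shows "dyadic (f x)"
proof -
  obtain B where B: "pls f B" using F_pls[OF f] by blast
  have "finite (insert x B)" "\<forall>b\<in>insert x B. dyadic b" using B d unfolding pls_def by auto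
  from eventually_happens'[OF _ grid_exists[OF this]]
  obtain N where N: "\<forall>b\<in>insert x B. \<exists>j::int. b * 2^N = j" by auto
  then obtain i :: int where i: "x * 2^N = i" by auto
  have "x * 2^N \<ge> 0" using x by simp
  then have i0: "i \<ge> 0" using i by simp
  have "x * 2^N \<le> 1 * 2^N" using x by (intro mult_right_mono) auto
  then have "real_of_int i \<le> 2^N" using i by simp
  then have "i \<le> 2^N" by (metis of_int_le_iff of_int_numeral of_int_power)
  then have iN: "nat i \<le> (2::nat)^N" using i0 by (simp add: nat_le_iff)
  have "x = real (nat i) / 2^N" using i i0 by (simp add: field_simps)
  then show ?thesis using grid_dyadic[OF f B _ iN] N by auto
qed



definition finv :: "(real \<Rightarrow> real) \<Rightarrow> real \<Rightarrow> real" where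
  "finv f x = (if x \<in> {0..1} then inv_into {0..1} f x else x)"

lemma F_inj: "f \<in> thompsonF \<Longrightarrow> inj_on f {0..1}"
  by (rule bij_betw_imp_inj_on[OF F_bij])

lemma F_surj: "f \<in> thompsonF \<Longrightarrow> f ` {0..1} = {0..1}"
  by (rule bij_betw_imp_surj_on[OF F_bij])

lemma finv_f: assumes f: "f \<in> thompsonF" shows "finv f (f x) = x"
proof (cases "x \<in> {0..1}")
  case True
  then have "f x \<in> {0..1}" using F_range[OF f] by simp
  then show ?thesis using True inv_into_f_f[OF F_inj[OF f] True] by (simp add: finv_def)
next
  case False
  then show ?thesis using F_out[OF f False] by (auto simp: finv_def)
qed

lemma f_finv: assumes f: "f \<in> thompsonF" shows "f (finv f y) = y"
proof (cases "y \<in> {0..1}")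
  case True
  then have "y \<in> f ` {0..1}" using F_surj[OF f] by simp
  then show ?thesis using True f_inv_into_f[of y f "{0..1}"] by (simp add: finv_def)
next
  case False
  then show ?thesis using F_out[OF f False] by (auto simp: finv_def)
qed

lemma finv_range: assumes f: "f \<in> thompsonF" and y: "y \<in> {0..1}" shows "finv f y \<in> {0..1}"
proof -
  have "y \<in> f ` {0..1}" using F_surj[OF f] y by simp
  then show ?thesis using y inv_into_into[of y f "{0..1}"] by (simp add: finv_def)
qed

lemma finv_F: assumes f: "f \<in> thompsonF" shows "finv f \<in> thompsonF"
proof -
  let ?g = "finv f"
  have bij: "bij_betw ?g {0..1} {0..1}"
  proof -
    have "bij_betw (inv_into {0..1} f) {0..1} {0..1}"
      using bij_betw_inv_into[OF F_bij[OF f]] .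
    moreover have "\<And>x. x \<in> {0..1} \<Longrightarrow> ?g x = inv_into {0..1} f x" by (simp add: finv_def)
    ultimately show ?thesis using bij_betw_cong by metis
  qed
  have cont: "continuous_on {0..1} ?g"
  proof -
    have "continuous_on {0..1} (inv_into {0..1} f)" by (rule F_icont[OF f])
    moreover have "\<And>x. x \<in> {0..1} \<Longrightarrow> ?g x = inv_into {0..1} f x" by (simp add: finv_def)
    ultimately show ?thesis using continuous_on_cong by metis
  qed
  have icont: "continuous_on {0..1} (inv_into {0..1} ?g)"
  proof -
    have inj: "inj_on ?g {0..1}" by (rule bij_betw_imp_inj_on[OF bij])
    have "\<And>y. y \<in> {0..1} \<Longrightarrow> inv_into {0..1} ?g y = f y"
      using inv_into_f_eq[OF inj] F_range[OF f] finv_f[OF f] by metis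
    then show ?thesis using F_cont[OF f] continuous_on_cong by metis
  qed
  obtain B where B: "pls f B" using F_pls[OF f] by metis
  have fin: "finite B" and sub: "B \<subseteq> {0..1}" and b0: "0 \<in> B" and b1: "1 \<in> B"
    and D: "\<forall>b\<in>B. dyadic b"
    and A: "\<And>x y. 0 \<le> x \<Longrightarrow> x < y \<Longrightarrow> y \<le> 1 \<Longrightarrow> (\<forall>b\<in>B. b \<le> x \<or> y \<le> b) \<Longrightarrow> affp f x y"
    using B unfolding pls_def by auto
  have "pls ?g (f ` B)"
    unfolding pls_def
  proof (intro conjI allI impI)
    show "finite (f ` B)" using fin by simp
    show "f ` B \<subseteq> {0..1}" using sub F_range[OF f] by auto
    show "0 \<in> f ` B" using b0 F_0[OF f] by force
    show "1 \<in> f ` B" using b1 F_1[OF f] by force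
    show "\<forall>b\<in>f ` B. dyadic b" using D sub F_dyadic[OF f] by auto
    fix y1 y2 :: real assume y10: "0 \<le> y1" and y12: "y1 < y2" and y21: "y2 \<le> 1"
      and nb: "\<forall>b\<in>f ` B. b \<le> y1 \<or> y2 \<le> b"
    define x1 where "x1 = ?g y1"
    define x2 where "x2 = ?g y2"
    have x1r: "x1 \<in> {0..1}" and x2r: "x2 \<in> {0..1}" unfolding x1_def x2_def
      using finv_range[OF f] y10 y12 y21 by auto
    have fx1: "f x1 = y1" and fx2: "f x2 = y2" unfolding x1_def x2_def using f_finv[OF f] by auto
    have x12: "x1 < x2" using F_less_iff[OF f x1r x2r] fx1 fx2 y12 by simp
    have "affp f x1 x2"
    proof (rule A)
      show "\<forall>b\<in>B. b \<le> x1 \<or> x2 \<le> b"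
      proof
        fix b assume bB: "b \<in> B"
        then have br: "b \<in> {0..1}" using sub by auto
        have "f b \<le> y1 \<or> y2 \<le> f b" using nb bB by auto
        then show "b \<le> x1 \<or> x2 \<le> b"
          using F_le_iff[OF f br x1r] F_le_iff[OF f x2r br] fx1 fx2 by auto
      qed
    qed (use x1r x2r x12 in auto)
    then obtain k c where kc: "\<forall>z\<in>{x1..x2}. f z = 2 powr real_of_int k * z + c"
      unfolding affp_def by metis
    show "affp ?g y1 y2"
      unfolding affp_def
    proof (intro exI[of _ "- k"] exI[of _ "- (2 powr real_of_int (- k) * c)"] ballI)
      fix y assume y: "y \<in> {y1..y2}"
      then have yr: "y \<in> {0..1}" using y10 y21 by auto
      have gr: "?g y \<in> {0..1}" using finv_range[OF f yr] .
      have "f x1 \<le> f (?g y)" "f (?g y) \<le> f x2" using f_finv[OF f] fx1 fx2 y by auto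
      then have "?g y \<in> {x1..x2}" using F_le_iff[OF f x1r gr] F_le_iff[OF f gr x2r] by auto
      then have "y = 2 powr real_of_int k * ?g y + c" using kc f_finv[OF f, of y] by metis
      then have "2 powr real_of_int (- k) * y = 2 powr real_of_int (- k) * (2 powr real_of_int k * ?g y + c)"
        by (rule arg_cong)
      also have "\<dots> = ?g y + 2 powr real_of_int (- k) * c"
      proof -
        have p: "2 powr real_of_int (- k) * 2 powr real_of_int k = 1" by (simp add: powr_add[symmetric])
        show ?thesis using p by (simp add: distrib_left mult.assoc[symmetric])
      qed
      finally show "?g y = 2 powr real_of_int (- k) * y + - (2 powr real_of_int (- k) * c)"
        by simp
    qed
  qed
  then have "pl_dyadic ?g" by (rule pls_pl_dyadic)
  moreover have "\<forall>x. x \<notin> {0..1} \<longrightarrow> ?g x = x" by (simp add: finv_def)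
  ultimately show ?thesis unfolding thompsonF_def using bij cont icont by simp
qed

lemma finv_cont: "f \<in> thompsonF \<Longrightarrow> continuous_on {0..1} (finv f)"
  using F_cont finv_F by metis

lemma comp_F: assumes f: "f \<in> thompsonF" and g: "g \<in> thompsonF" shows "f \<circ> g \<in> thompsonF"
proof -
  have bij: "bij_betw (f \<circ> g) {0..1} {0..1}" by (rule bij_betw_trans[OF F_bij[OF g] F_bij[OF f]])
  have cont: "continuous_on {0..1} (f \<circ> g)"
    unfolding comp_def using F_cont[OF f] F_cont[OF g] F_range[OF g]
    by (intro continuous_on_compose2[of "{0..1}" f "{0..1}" g]) auto
  have icont: "continuous_on {0..1} (inv_into {0..1} (f \<circ> g))"
  proof -
    have inj: "inj_on (f \<circ> g) {0..1}" by (rule bij_betw_imp_inj_on[OF bij])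
    have eq: "\<And>y. y \<in> {0..1} \<Longrightarrow> inv_into {0..1} (f \<circ> g) y = finv g (finv f y)"
    proof -
      fix y :: real assume y: "y \<in> {0..1}"
      have "finv g (finv f y) \<in> {0..1}" using finv_range[OF g finv_range[OF f y]] .
      moreover have "(f \<circ> g) (finv g (finv f y)) = y" using f_finv[OF f] f_finv[OF g] by simp
      ultimately show "inv_into {0..1} (f \<circ> g) y = finv g (finv f y)"
        using inv_into_f_eq[OF inj] by metis
    qed
    have "continuous_on {0..1} (\<lambda>y. finv g (finv f y))"
      using finv_cont[OF f] finv_cont[OF g] finv_range[OF f]
      by (intro continuous_on_compose2[of "{0..1}" "finv g" "{0..1}" "finv f"]) auto
    then show ?thesis using eq continuous_on_cong by metis
  qed
  obtain Bf where Bf: "pls f Bf" using F_pls[OF f] by metis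
  obtain Bg where Bg: "pls g Bg" using F_pls[OF g] by metis
  have finf: "finite Bf" and subf: "Bf \<subseteq> {0..1}" and Df: "\<forall>b\<in>Bf. dyadic b"
    and Af: "\<And>x y. 0 \<le> x \<Longrightarrow> x < y \<Longrightarrow> y \<le> 1 \<Longrightarrow> (\<forall>b\<in>Bf. b \<le> x \<or> y \<le> b) \<Longrightarrow> affp f x y"
    using Bf unfolding pls_def by auto
  have fing: "finite Bg" and subg: "Bg \<subseteq> {0..1}" and g0: "0 \<in> Bg" and g1: "1 \<in> Bg" and Dg: "\<forall>b\<in>Bg. dyadic b"
    and Ag: "\<And>x y. 0 \<le> x \<Longrightarrow> x < y \<Longrightarrow> y \<le> 1 \<Longrightarrow> (\<forall>b\<in>Bg. b \<le> x \<or> y \<le> b) \<Longrightarrow> affp g x y"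
    using Bg unfolding pls_def by auto
  have "pls (f \<circ> g) (Bg \<union> finv g ` Bf)"
    unfolding pls_def
  proof (intro conjI allI impI)
    show "finite (Bg \<union> finv g ` Bf)" using finf fing by simp
    show "Bg \<union> finv g ` Bf \<subseteq> {0..1}" using subf subg finv_range[OF g] by auto
    show "0 \<in> Bg \<union> finv g ` Bf" using g0 by simp
    show "1 \<in> Bg \<union> finv g ` Bf" using g1 by simp
    show "\<forall>b\<in>Bg \<union> finv g ` Bf. dyadic b" using Dg Df subf F_dyadic[OF finv_F[OF g]] by auto
    fix x y :: real assume x0: "0 \<le> x" and xy: "x < y" and y1: "y \<le> 1"
      and nb: "\<forall>b\<in>Bg \<union> finv g ` Bf. b \<le> x \<or> y \<le> b"
    have xr: "x \<in> {0..1}" and yr: "y \<in> {0..1}" using x0 xy y1 by auto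
    have "affp g x y" using Ag[OF x0 xy y1] nb by auto
    then obtain k c where kc: "\<forall>z\<in>{x..y}. g z = 2 powr real_of_int k * z + c"
      unfolding affp_def by metis
    have gxr: "g x \<in> {0..1}" and gyr: "g y \<in> {0..1}" using F_range[OF g] xr yr by auto
    have gxy: "g x < g y" using F_less_iff[OF g xr yr] xy by simp
    have "affp f (g x) (g y)"
    proof (rule Af)
      show "\<forall>b\<in>Bf. b \<le> g x \<or> g y \<le> b"
      proof
        fix b assume bB: "b \<in> Bf"
        then have br: "b \<in> {0..1}" using subf by auto
        have zr: "finv g b \<in> {0..1}" using finv_range[OF g br] .
        have gz: "g (finv g b) = b" using f_finv[OF g] .
        have "finv g b \<le> x \<or> y \<le> finv g b" using nb bB by auto
        then show "b \<le> g x \<or> g y \<le> b"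
          using F_le_iff[OF g zr xr] F_le_iff[OF g yr zr] gz by auto
      qed
    qed (use gxr gyr gxy in auto)
    then obtain k' c' where kc': "\<forall>z\<in>{g x..g y}. f z = 2 powr real_of_int k' * z + c'"
      unfolding affp_def by metis
    show "affp (f \<circ> g) x y"
      unfolding affp_def
    proof (intro exI[of _ "k' + k"] exI[of _ "2 powr real_of_int k' * c + c'"] ballI)
      fix z assume z: "z \<in> {x..y}"
      then have zr: "z \<in> {0..1}" using x0 y1 by auto
      have "g z \<in> {g x..g y}" using F_mono[OF g] z x0 y1 by auto
      then have "(f \<circ> g) z = 2 powr real_of_int k' * (2 powr real_of_int k * z + c) + c'"
        using kc' kc z by simp
      also have "\<dots> = 2 powr real_of_int (k' + k) * z + (2 powr real_of_int k' * c + c')"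
        by (simp add: powr_add algebra_simps)
      finally show "(f \<circ> g) z = 2 powr real_of_int (k' + k) * z + (2 powr real_of_int k' * c + c')" .
    qed
  qed
  then have "pl_dyadic (f \<circ> g)" by (rule pls_pl_dyadic)
  moreover have "\<forall>x. x \<notin> {0..1} \<longrightarrow> (f \<circ> g) x = x" using F_out[OF f] F_out[OF g] by simp
  ultimately show ?thesis unfolding thompsonF_def using bij cont icont by simp
qed

lemma cont_cong: assumes "continuous_on S g" "\<And>x. x \<in> S \<Longrightarrow> f x = g x" shows "continuous_on S f"
proof -
  have "continuous_on S f = continuous_on S g" by (rule continuous_on_cong[OF refl]) (rule assms(2))
  then show ?thesis using assms(1) by simp
qed

lemma inv_id: "y \<in> S \<Longrightarrow> inv_into S id y = y"
  using inv_into_f_f[of id S y] by simp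

lemma affp_id: "affp id x y"
  unfolding affp_def by (rule exI[of _ 0], rule exI[of _ 0]) simp

lemma id_F: "id \<in> thompsonF"
proof -
  have "pls id {0,1}" unfolding pls_def using affp_id by simp
  then have pl: "pl_dyadic id" by (rule pls_pl_dyadic)
  have bij: "bij_betw id {0..1} {0..1::real}" by (rule bij_betw_id)
  have ic: "continuous_on {0..1} (inv_into {0..1} id :: real \<Rightarrow> real)"
    by (rule cont_cong[OF continuous_on_id]) (rule inv_id)
  have c: "continuous_on {0..1} (id :: real \<Rightarrow> real)" by (rule cont_cong[OF continuous_on_id]) simp
  have o: "\<forall>x::real. x \<notin> {0..1} \<longrightarrow> id x = x" by simp
  show ?thesis unfolding thompsonF_def mem_Collect_eq
    using pl bij ic c o by (intro conjI)
qed

lemma carrier_G[simp]: "carrier thompsonG = thompsonF" by (simp add: thompsonG_def)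
lemma mult_G[simp]: "x \<otimes>\<^bsub>thompsonG\<^esub> y = x \<circ> y" by (simp add: thompsonG_def)
lemma one_G[simp]: "\<one>\<^bsub>thompsonG\<^esub> = id" by (simp add: thompsonG_def)

lemma group_G: "group thompsonG"
proof (rule groupI)
  fix x assume x: "x \<in> carrier thompsonG"
  have "finv x \<circ> x = id" using finv_f[of x] x by (auto simp: fun_eq_iff)
  then show "\<exists>y\<in>carrier thompsonG. y \<otimes>\<^bsub>thompsonG\<^esub> x = \<one>\<^bsub>thompsonG\<^esub>"
    using finv_F x by auto
qed (auto simp: comp_F id_F comp_assoc)

lemma inv_G: assumes "f \<in> thompsonF" shows "inv\<^bsub>thompsonG\<^esub> f = finv f"
proof -
  have "finv f \<circ> f = id" using finv_f[of f] assms by (auto simp: fun_eq_iff)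
  then show ?thesis using group.inv_equality[OF group_G, of "finv f" f] assms finv_F by simp
qed



definition val :: "bool list \<Rightarrow> real" where
  "val u = (\<Sum>n<length u. (if u ! n then 1 else 0) / 2 ^ Suc n)"

lemma half_sums: "(\<lambda>n. 1 / 2 ^ Suc n :: real) sums 1"
  using power_half_series by (simp add: power_one_over)

lemma wv_summable: "summable (\<lambda>n. (if \<alpha> n then 1 else 0) / 2 ^ Suc n :: real)"
proof (rule summable_comparison_test[OF _ sums_summable[OF half_sums]])
  show "\<exists>N. \<forall>n\<ge>N. norm ((if \<alpha> n then 1 else 0) / 2 ^ Suc n :: real) \<le> 1 / 2 ^ Suc n"
    by auto
qed

lemma wv_range: "word_val \<alpha> \<in> {0..1}"
proof -
  have "word_val \<alpha> \<ge> 0" unfolding word_val_def by (rule suminf_nonneg[OF wv_summable]) simp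
  moreover have "word_val \<alpha> \<le> (\<Sum>n. 1 / 2 ^ Suc n)" unfolding word_val_def
    by (rule suminf_le[OF _ wv_summable sums_summable[OF half_sums]]) simp
  ultimately show ?thesis using sums_unique[OF half_sums] by simp
qed

lemma wv_prepend: "word_val (prepend u \<alpha>) = val u + word_val \<alpha> / 2 ^ length u"
proof -
  let ?f = "\<lambda>n. (if prepend u \<alpha> n then 1 else 0) / 2 ^ Suc n :: real"
  let ?k = "length u"
  have "word_val (prepend u \<alpha>) = (\<Sum>n. ?f (n + ?k)) + (\<Sum>i<?k. ?f i)"
    unfolding word_val_def by (rule suminf_split_initial_segment[OF wv_summable])
  moreover have "(\<Sum>i<?k. ?f i) = val u" unfolding val_def prepend_def by simp
  moreover have "(\<Sum>n. ?f (n + ?k)) = word_val \<alpha> / 2 ^ ?k"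
  proof -
    have "\<And>n. ?f (n + ?k) = (if \<alpha> n then 1 else 0) / 2 ^ Suc n / 2 ^ ?k"
      by (simp add: prepend_def power_add)
    then have "(\<Sum>n. ?f (n + ?k)) = (\<Sum>n. (if \<alpha> n then 1 else 0) / 2 ^ Suc n / 2 ^ ?k)" by simp
    also have "\<dots> = word_val \<alpha> / 2 ^ ?k" unfolding word_val_def
      by (rule suminf_divide[OF wv_summable])
    finally show ?thesis .
  qed
  ultimately show ?thesis by simp
qed

lemma floor_double: "\<lfloor>2 * (t::real)\<rfloor> = 2 * \<lfloor>t\<rfloor> + (if odd \<lfloor>2 * t\<rfloor> then 1 else 0)"
proof -
  have a: "real_of_int \<lfloor>t\<rfloor> \<le> t" "t < real_of_int \<lfloor>t\<rfloor> + 1" by linarith+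
  have "\<lfloor>2 * t\<rfloor> \<ge> 2 * \<lfloor>t\<rfloor>" using a by linarith
  moreover have "\<lfloor>2 * t\<rfloor> \<le> 2 * \<lfloor>t\<rfloor> + 1" using a by linarith
  ultimately have "\<lfloor>2 * t\<rfloor> = 2 * \<lfloor>t\<rfloor> \<or> \<lfloor>2 * t\<rfloor> = 2 * \<lfloor>t\<rfloor> + 1" by linarith
  then show ?thesis by auto
qed

lemma wv_surj: assumes x: "x \<in> {0..1}" shows "\<exists>\<alpha>. word_val \<alpha> = x"
proof (cases "x = 1")
  case True
  have "word_val (\<lambda>_. True) = 1" unfolding word_val_def using sums_unique[OF half_sums] by simp
  then show ?thesis using True by blast
next
  case False
  then have x1: "x < 1" and x0: "0 \<le> x" using x by auto
  define \<alpha> where "\<alpha> n = odd \<lfloor>x * 2 ^ Suc n\<rfloor>" for n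
  have ps: "(\<Sum>n<N. (if \<alpha> n then 1 else 0) / 2 ^ Suc n) = real_of_int \<lfloor>x * 2 ^ N\<rfloor> / 2 ^ N" for N
  proof (induction N)
    case 0
    have "\<lfloor>x\<rfloor> = 0" using x0 x1 by (simp add: floor_eq_iff)
    then show ?case by simp
  next
    case (Suc N)
    have fd: "\<lfloor>x * 2 ^ Suc N\<rfloor> = 2 * \<lfloor>x * 2 ^ N\<rfloor> + (if \<alpha> N then 1 else 0)"
      using floor_double[of "x * 2 ^ N"] unfolding \<alpha>_def by (simp add: algebra_simps)
    have "(\<Sum>n<Suc N. (if \<alpha> n then 1 else 0) / 2 ^ Suc n) =
          real_of_int \<lfloor>x * 2 ^ N\<rfloor> / 2 ^ N + (if \<alpha> N then 1 else 0) / 2 ^ Suc N"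
      using Suc by simp
    also have "\<dots> = real_of_int (2 * \<lfloor>x * 2 ^ N\<rfloor> + (if \<alpha> N then 1 else 0)) / 2 ^ Suc N"
      by (simp add: field_simps)
    finally show ?case using fd by simp
  qed
  have lim: "(\<lambda>N. real_of_int \<lfloor>x * 2 ^ N\<rfloor> / 2 ^ N) \<longlonglongrightarrow> x"
  proof (rule tendsto_sandwich[of "\<lambda>N. x - (1/2)^N" _ _ "\<lambda>N. x"])
    show "\<forall>\<^sub>F N in sequentially. x - (1 / 2) ^ N \<le> real_of_int \<lfloor>x * 2 ^ N\<rfloor> / 2 ^ N"
    proof (rule always_eventually, rule allI)
      fix N :: nat
      have "x * 2 ^ N - 1 \<le> real_of_int \<lfloor>x * 2 ^ N\<rfloor>" by linarith
      then have "(x * 2 ^ N - 1) / 2 ^ N \<le> real_of_int \<lfloor>x * 2 ^ N\<rfloor> / 2 ^ N"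
        by (rule divide_right_mono) simp
      then show "x - (1 / 2) ^ N \<le> real_of_int \<lfloor>x * 2 ^ N\<rfloor> / 2 ^ N"
        by (simp add: field_simps power_one_over)
    qed
    show "\<forall>\<^sub>F N in sequentially. real_of_int \<lfloor>x * 2 ^ N\<rfloor> / 2 ^ N \<le> x"
    proof (rule always_eventually, rule allI)
      fix N :: nat
      have "real_of_int \<lfloor>x * 2 ^ N\<rfloor> \<le> x * 2 ^ N" by linarith
      then show "real_of_int \<lfloor>x * 2 ^ N\<rfloor> / 2 ^ N \<le> x" by (simp add: field_simps)
    qed
    have "(\<lambda>N. (1/2::real)^N) \<longlonglongrightarrow> 0" by (rule LIMSEQ_realpow_zero) auto
    then show "(\<lambda>N. x - (1/2)^N) \<longlonglongrightarrow> x" using tendsto_diff[OF tendsto_const[of x]] by fastforce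
  qed (rule tendsto_const)
  have "(\<lambda>n. (if \<alpha> n then 1 else 0) / 2 ^ Suc n :: real) sums x"
    unfolding sums_def using lim ps by simp
  then have "word_val \<alpha> = x" unfolding word_val_def by (rule sums_unique[symmetric])
  then show ?thesis by blast
qed

fun nw :: "nat \<Rightarrow> nat \<Rightarrow> bool list" where
  "nw 0 j = []"
| "nw (Suc m) j = nw m (j div 2) @ [odd j]"

lemma length_nw[simp]: "length (nw m j) = m"
  by (induction m arbitrary: j) auto

lemma val_snoc: "val (u @ [b]) = val u + (if b then 1 else 0) / 2 ^ Suc (length u)"
  unfolding val_def by (simp add: nth_append)

lemma val_nw: "j < 2 ^ m \<Longrightarrow> val (nw m j) = real j / 2 ^ m"
proof (induction m arbitrary: j)
  case 0 then show ?case by (simp add: val_def)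
next
  case (Suc m)
  have "j div 2 < 2 ^ m" using Suc.prems by auto
  then have "val (nw (Suc m) j) = real (j div 2) / 2 ^ m + (if odd j then 1 else 0) / 2 ^ Suc m"
    using Suc.IH by (simp add: val_snoc)
  also have "\<dots> = (2 * real (j div 2) + (if odd j then 1 else 0)) / 2 ^ Suc m"
    by (simp add: field_simps)
  also have "2 * real (j div 2) + (if odd j then 1 else 0) = real j"
  proof -
    have "j = 2 * (j div 2) + j mod 2" by simp
    then have "real j = 2 * real (j div 2) + real (j mod 2)" by (metis of_nat_add of_nat_mult of_nat_numeral)
    moreover have "real (j mod 2) = (if odd j then 1 else 0)" by (simp add: odd_iff_mod_2_eq_one)
    ultimately show ?thesis by simp
  qed
  finally show ?case .
qed

lemma val_allF: "True \<notin> set u \<Longrightarrow> val u = 0"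
  unfolding val_def by (auto intro!: sum.neutral simp: in_set_conv_nth)

lemma val_allT: "False \<notin> set u \<Longrightarrow> val u = 1 - 1 / 2 ^ length u"
proof (induction u rule: rev_induct)
  case Nil then show ?case by (simp add: val_def)
next
  case (snoc b u)
  then have "b" "False \<notin> set u" by auto
  then show ?case using snoc.IH by (simp add: val_snoc field_simps)
qed

lemma nw_mixed: assumes "0 < j" "j < 2 ^ m - 1" shows "True \<in> set (nw m j)" "False \<in> set (nw m j)"
proof -
  have jm: "j < 2 ^ m" using assms by simp
  show "True \<in> set (nw m j)"
  proof (rule ccontr)
    assume "True \<notin> set (nw m j)"
    then have "real j / 2 ^ m = 0" using val_allF val_nw[OF jm] by simp
    then show False using assms by simp
  qed
  show "False \<in> set (nw m j)"
  proof (rule ccontr)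
    assume "False \<notin> set (nw m j)"
    then have "real j / 2 ^ m = 1 - 1 / 2 ^ m" using val_allT val_nw[OF jm] by simp
    then have "real j = 2 ^ m - 1" by (simp add: field_simps)
    then have "real (j + 1) = real (2 ^ m)" by simp
    then have "j + 1 = 2 ^ m" by (rule of_nat_eq_iff[THEN iffD1])
    then show False using assms by simp
  qed
qed

lemma cell_word: assumes j: "j < 2 ^ M" and x: "x \<in> {real j / 2 ^ M .. real (Suc j) / 2 ^ M}"
  shows "\<exists>\<alpha>. x = word_val (prepend (nw M j) \<alpha>)"
proof -
  have r: "x * 2 ^ M - j \<in> {0..1}" using x by (auto simp: field_simps)
  obtain \<alpha> where a: "word_val \<alpha> = x * 2 ^ M - j" using wv_surj[OF r] by auto
  have "word_val (prepend (nw M j) \<alpha>) = real j / 2 ^ M + (x * 2 ^ M - j) / 2 ^ M"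
    using wv_prepend val_nw[OF j] a by simp
  also have "\<dots> = x" by (simp add: field_simps)
  finally show ?thesis by (intro exI[of _ \<alpha>]) simp
qed



context
  fixes H assumes sub: "subgroup H thompsonG"
begin

lemma H_F: "h \<in> H \<Longrightarrow> h \<in> thompsonF"
  using subgroup.subset[OF sub] by auto

lemma H_id: "id \<in> H"
  using subgroup.one_closed[OF sub] by simp

lemma H_comp: "f \<in> H \<Longrightarrow> g \<in> H \<Longrightarrow> f \<circ> g \<in> H"
  using subgroup.m_closed[OF sub, of f g] by simp

lemma H_finv: "h \<in> H \<Longrightarrow> finv h \<in> H"
  using subgroup.m_inv_closed[OF sub, of h] inv_G[OF H_F] by simp

lemma sim_refl: "sim H u u"
  unfolding sim_def has_branches_def using H_id by (intro bexI[of _ id]) auto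

lemma sim_sym: "sim H u v \<Longrightarrow> sim H v u"
proof -
  assume "sim H u v"
  then obtain h where h: "h \<in> H" "has_branches h u v" unfolding sim_def by auto
  have "has_branches (finv h) v u" unfolding has_branches_def
  proof
    fix \<alpha>
    have "finv h (word_val (prepend v \<alpha>)) = finv h (h (word_val (prepend u \<alpha>)))"
      using h(2) unfolding has_branches_def by simp
    also have "\<dots> = word_val (prepend u \<alpha>)" using finv_f[OF H_F[OF h(1)]] .
    finally show "finv h (word_val (prepend v \<alpha>)) = word_val (prepend u \<alpha>)" .
  qed
  then show "sim H v u" unfolding sim_def using H_finv[OF h(1)] by auto
qed

lemma sim_trans: "sim H u v \<Longrightarrow> sim H v w \<Longrightarrow> sim H u w"
proof -
  assume "sim H u v" "sim H v w"
  then obtain h g where h: "h \<in> H" "has_branches h u v" and g: "g \<in> H" "has_branches g v w"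
    unfolding sim_def by auto
  have "has_branches (g \<circ> h) u w" using h(2) g(2) unfolding has_branches_def by simp
  then show "sim H u w" unfolding sim_def using H_comp[OF g(1) h(1)] by auto
qed

lemma prepend_append: "prepend (u @ w) \<alpha> = prepend u (prepend w \<alpha>)"
  unfolding prepend_def by (auto simp: fun_eq_iff nth_append)

lemma sim_app: "sim H u v \<Longrightarrow> sim H (u @ w) (v @ w)"
  unfolding sim_def has_branches_def prepend_append by auto

end

lemma decompF: "False \<in> set u \<Longrightarrow> \<exists>r w. u = replicate r True @ False # w"
proof (induction u)
  case Nil then show ?case by simp
next
  case (Cons a u)
  show ?case
  proof (cases a)
    case False then show ?thesis by (intro exI[of _ 0] exI[of _ u]) simp
  next
    case True
    then obtain r w where "u = replicate r True @ False # w" using Cons by auto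
    then show ?thesis using True by (intro exI[of _ "Suc r"] exI[of _ w]) simp
  qed
qed

lemma decompT: "True \<in> set u \<Longrightarrow> \<exists>r w. u = replicate r False @ True # w"
proof (induction u)
  case Nil then show ?case by simp
next
  case (Cons a u)
  show ?case
  proof (cases a)
    case True then show ?thesis by (intro exI[of _ 0] exI[of _ u]) simp
  next
    case False
    then obtain r w where "u = replicate r False @ True # w" using Cons by auto
    then show ?thesis using False by (intro exI[of _ "Suc r"] exI[of _ w]) simp
  qed
qed

lemma sim_mixed:
  assumes sub: "subgroup H thompsonG"
    and h1: "\<And>r::nat. r \<ge> 1 \<Longrightarrow> sim H (replicate r True @ [False]) [True, False]"
    and h2: "\<And>s::nat. s \<ge> 1 \<Longrightarrow> sim H (replicate s False @ [True]) [False, True]"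
    and h3: "sim H [False, True] [True, False]"
    and h4: "sim H [True, False] [False, True, False]"
    and h5: "sim H [False, True, False] [False, True, True]"
    and uT: "True \<in> set u" and uF: "False \<in> set u"
  shows "sim H u [False, True]"
proof -
  note ss = sim_sym[OF sub] and st = sim_trans[OF sub] and sa = sim_app[OF sub]
  have s010: "sim H [False, True, False] [False, True]" using st[OF ss[OF h4] ss[OF h3]] .
  have s011: "sim H [False, True, True] [False, True]" using st[OF ss[OF h5] s010] .
  have s01b: "sim H [False, True, b] [False, True]" for b using s010 s011 by (cases b) auto
  have s01w: "sim H ([False, True] @ w) [False, True]" for w
  proof (induction w)
    case Nil then show ?case using sim_refl[OF sub] by simp
  next
    case (Cons b w)
    have "sim H ([False, True, b] @ w) ([False, True] @ w)" using sa[OF s01b] .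
    then show ?case using st[OF _ Cons.IH] by simp
  qed
  obtain a u' where u: "u = a # u'" using uT by (cases u) auto
  show ?thesis
  proof (cases a)
    case True
    obtain r w where rw: "u = replicate r True @ False # w" using decompF[OF uF] by blast
    have r1: "r \<ge> 1" using rw u True by (cases r) auto
    have "sim H ((replicate r True @ [False]) @ w) ([True, False] @ w)" using sa[OF h1[OF r1]] .
    moreover have "sim H ([True, False] @ w) ([False, True] @ w)" using sa[OF ss[OF h3]] .
    ultimately have "sim H u ([False, True] @ w)" using st rw by simp
    then show ?thesis using st s01w by blast
  next
    case False
    obtain r w where rw: "u = replicate r False @ True # w" using decompT[OF uT] by blast
    have r1: "r \<ge> 1" using rw u False by (cases r) auto
    have "sim H ((replicate r False @ [True]) @ w) ([False, True] @ w)" using sa[OF h2[OF r1]] .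
    then have "sim H u ([False, True] @ w)" using rw by simp
    then show ?thesis using st s01w by blast
  qed
qed



definition lin0 :: "(real \<Rightarrow> real) \<Rightarrow> int \<Rightarrow> bool" where
  "lin0 f k \<longleftrightarrow> (\<exists>\<delta>>0. \<forall>x\<in>{0..\<delta>}. f x = 2 powr real_of_int k * x)"

definition lin1 :: "(real \<Rightarrow> real) \<Rightarrow> int \<Rightarrow> bool" where
  "lin1 f k \<longleftrightarrow> (\<exists>\<delta>>0. \<forall>x\<in>{1-\<delta>..1}. f x = 1 + 2 powr real_of_int k * (x - 1))"

lemma F_lin0: assumes f: "f \<in> thompsonF" shows "\<exists>k. lin0 f k"
proof -
  obtain B where B: "pls f B" using F_pls[OF f] by metis
  have fin: "finite B" and sub: "B \<subseteq> {0..1}" and b1: "1 \<in> B"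
    and A: "\<And>x y. 0 \<le> x \<Longrightarrow> x < y \<Longrightarrow> y \<le> 1 \<Longrightarrow> (\<forall>b\<in>B. b \<le> x \<or> y \<le> b) \<Longrightarrow> affp f x y"
    using B unfolding pls_def by auto
  define \<delta> where "\<delta> = Min (B - {0})"
  have fin': "finite (B - {0})" and ne: "B - {0} \<noteq> {}" using fin b1 by auto
  have dB: "\<delta> \<in> B - {0}" unfolding \<delta>_def using Min_in[OF fin' ne] .
  have dpos: "\<delta> > 0" and d1: "\<delta> \<le> 1" using dB sub by force+
  have dmin: "\<And>b. b \<in> B \<Longrightarrow> b \<noteq> 0 \<Longrightarrow> \<delta> \<le> b" unfolding \<delta>_def using fin' by auto
  have "affp f 0 \<delta>"
  proof (rule A)
    show "\<forall>b\<in>B. b \<le> 0 \<or> \<delta> \<le> b" using dmin by (metis order_refl)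
  qed (use dpos d1 in auto)
  then obtain k c where kc: "\<forall>z\<in>{0..\<delta>}. f z = 2 powr real_of_int k * z + c" unfolding affp_def by metis
  have "c = 0" using kc F_0[OF f] dpos by force
  then have "lin0 f k" unfolding lin0_def using kc dpos by auto
  then show ?thesis by blast
qed

lemma F_lin1: assumes f: "f \<in> thompsonF" shows "\<exists>k. lin1 f k"
proof -
  obtain B where B: "pls f B" using F_pls[OF f] by metis
  have fin: "finite B" and sub: "B \<subseteq> {0..1}" and b0: "0 \<in> B"
    and A: "\<And>x y. 0 \<le> x \<Longrightarrow> x < y \<Longrightarrow> y \<le> 1 \<Longrightarrow> (\<forall>b\<in>B. b \<le> x \<or> y \<le> b) \<Longrightarrow> affp f x y"
    using B unfolding pls_def by auto
  define \<mu> where "\<mu> = Max (B - {1})"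
  have fin': "finite (B - {1})" and ne: "B - {1} \<noteq> {}" using fin b0 by auto
  have dB: "\<mu> \<in> B - {1}" unfolding \<mu>_def using Max_in[OF fin' ne] .
  have d0: "\<mu> \<ge> 0" and d1: "\<mu> < 1" using dB sub by force+
  have dmax: "\<And>b. b \<in> B \<Longrightarrow> b \<noteq> 1 \<Longrightarrow> b \<le> \<mu>" unfolding \<mu>_def using fin' by auto
  have "affp f \<mu> 1"
  proof (rule A)
    show "\<forall>b\<in>B. b \<le> \<mu> \<or> 1 \<le> b" using dmax by (metis order_refl)
  qed (use d0 d1 in auto)
  then obtain k c where kc: "\<forall>z\<in>{\<mu>..1}. f z = 2 powr real_of_int k * z + c" unfolding affp_def by metis
  have "f 1 = 2 powr real_of_int k + c" using kc d1 by force
  then have c: "c = 1 - 2 powr real_of_int k" using F_1[OF f] by simp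
  have "lin1 f k" unfolding lin1_def
  proof (intro exI[of _ "1 - \<mu>"] conjI ballI)
    show "1 - \<mu> > 0" using d1 by simp
    fix x assume "x \<in> {1 - (1 - \<mu>)..1}"
    then have "x \<in> {\<mu>..1}" by simp
    then show "f x = 1 + 2 powr real_of_int k * (x - 1)" using kc c by (simp add: algebra_simps)
  qed
  then show ?thesis by blast
qed

lemma lin0_comp: assumes f: "lin0 f k" and g: "lin0 g l" shows "lin0 (f \<circ> g) (k + l)"
proof -
  obtain d1 where d1: "d1 > 0" "\<forall>x\<in>{0..d1}. f x = 2 powr real_of_int k * x" using f unfolding lin0_def by blast
  obtain d2 where d2: "d2 > 0" "\<forall>x\<in>{0..d2}. g x = 2 powr real_of_int l * x" using g unfolding lin0_def by blast
  define d where "d = min d2 (d1 / 2 powr real_of_int l)"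
  have dpos: "d > 0" unfolding d_def using d1 d2 by simp
  have "\<forall>x\<in>{0..d}. (f \<circ> g) x = 2 powr real_of_int (k + l) * x"
  proof
    fix x assume x: "x \<in> {0..d}"
    then have gx: "g x = 2 powr real_of_int l * x" using d2 unfolding d_def by auto
    have "x \<le> d1 / 2 powr real_of_int l" using x unfolding d_def by auto
    then have "2 powr real_of_int l * x \<le> d1" by (simp add: field_simps)
    then have "f (g x) = 2 powr real_of_int k * (2 powr real_of_int l * x)" using d1 gx x by auto
    then show "(f \<circ> g) x = 2 powr real_of_int (k + l) * x" by (simp add: powr_add)
  qed
  then show ?thesis unfolding lin0_def using dpos by blast
qed

lemma lin0_inv: assumes f: "lin0 f k" and g: "\<And>x. g (f x) = x" shows "lin0 g (- k)"
proof -
  obtain d1 where d1: "d1 > 0" "\<forall>x\<in>{0..d1}. f x = 2 powr real_of_int k * x" using f unfolding lin0_def by blast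
  define d where "d = 2 powr real_of_int k * d1"
  have dpos: "d > 0" unfolding d_def using d1 by simp
  have "\<forall>y\<in>{0..d}. g y = 2 powr real_of_int (- k) * y"
  proof
    fix y assume y: "y \<in> {0..d}"
    define x where "x = 2 powr real_of_int (- k) * y"
    have p: "2 powr real_of_int k * 2 powr real_of_int (- k) = 1" by (simp add: powr_add[symmetric])
    have "x \<le> d1" using y unfolding x_def d_def by (simp add: powr_minus field_simps)
    moreover have "x \<ge> 0" using y unfolding x_def by simp
    ultimately have "f x = 2 powr real_of_int k * x" using d1 by auto
    also have "\<dots> = y" unfolding x_def using p by (simp add: mult.assoc[symmetric])
    finally have "g y = x" using g by metis
    then show "g y = 2 powr real_of_int (- k) * y" unfolding x_def .
  qed
  then show ?thesis unfolding lin0_def using dpos by blast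
qed

lemma lin1_comp: assumes f: "lin1 f k" and g: "lin1 g l" shows "lin1 (f \<circ> g) (k + l)"
proof -
  obtain d1 where d1: "d1 > 0" "\<forall>x\<in>{1-d1..1}. f x = 1 + 2 powr real_of_int k * (x - 1)" using f unfolding lin1_def by blast
  obtain d2 where d2: "d2 > 0" "\<forall>x\<in>{1-d2..1}. g x = 1 + 2 powr real_of_int l * (x - 1)" using g unfolding lin1_def by blast
  define d where "d = min d2 (d1 / 2 powr real_of_int l)"
  have dpos: "d > 0" unfolding d_def using d1 d2 by simp
  have "\<forall>x\<in>{1-d..1}. (f \<circ> g) x = 1 + 2 powr real_of_int (k + l) * (x - 1)"
  proof
    fix x assume x: "x \<in> {1-d..1}"
    then have gx: "g x = 1 + 2 powr real_of_int l * (x - 1)" using d2 unfolding d_def by auto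
    have "1 - x \<le> d1 / 2 powr real_of_int l" using x unfolding d_def by auto
    then have "2 powr real_of_int l * (1 - x) \<le> d1" by (simp add: field_simps)
    moreover have "2 powr real_of_int l * (x - 1) \<le> 0" using x by (simp add: mult_nonneg_nonpos)
    moreover have "2 powr real_of_int l * (1 - x) = - (2 powr real_of_int l * (x - 1))" by (simp add: algebra_simps)
    ultimately have "g x \<in> {1 - d1..1}" using gx by simp
    then have "f (g x) = 1 + 2 powr real_of_int k * (2 powr real_of_int l * (x - 1))" using d1 gx by auto
    then show "(f \<circ> g) x = 1 + 2 powr real_of_int (k + l) * (x - 1)" by (simp add: powr_add)
  qed
  then show ?thesis unfolding lin1_def using dpos by blast
qed

lemma lin1_inv: assumes f: "lin1 f k" and g: "\<And>x. g (f x) = x" shows "lin1 g (- k)"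
proof -
  obtain d1 where d1: "d1 > 0" "\<forall>x\<in>{1-d1..1}. f x = 1 + 2 powr real_of_int k * (x - 1)" using f unfolding lin1_def by blast
  define d where "d = 2 powr real_of_int k * d1"
  have dpos: "d > 0" unfolding d_def using d1 by simp
  have "\<forall>y\<in>{1-d..1}. g y = 1 + 2 powr real_of_int (- k) * (y - 1)"
  proof
    fix y assume y: "y \<in> {1-d..1}"
    define x where "x = 1 + 2 powr real_of_int (- k) * (y - 1)"
    have p: "2 powr real_of_int k * 2 powr real_of_int (- k) = 1" by (simp add: powr_add[symmetric])
    have "1 - y \<le> 2 powr real_of_int k * d1" using y unfolding d_def by simp
    then have "2 powr real_of_int (- k) * (1 - y) \<le> d1" by (simp add: powr_minus field_simps)
    then have "x \<ge> 1 - d1" unfolding x_def by (simp add: algebra_simps)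
    moreover have "x \<le> 1" using y unfolding x_def by (simp add: mult_nonneg_nonpos)
    ultimately have "f x = 1 + 2 powr real_of_int k * (x - 1)" using d1 by auto
    also have "\<dots> = y" unfolding x_def using p by (simp add: mult.assoc[symmetric])
    finally have "g y = x" using g by metis
    then show "g y = 1 + 2 powr real_of_int (- k) * (y - 1)" unfolding x_def .
  qed
  then show ?thesis unfolding lin1_def using dpos by blast
qed

definition S :: "(real \<Rightarrow> real) set" where
  "S = {f \<in> thompsonF. \<exists>\<epsilon>>0. (\<forall>x\<in>{0..\<epsilon>}. f x = x) \<and> (\<forall>x\<in>{1-\<epsilon>..1}. f x = x)}"

lemma S_subgroup: "subgroup S thompsonG"
proof
  show "S \<subseteq> carrier thompsonG" unfolding S_def by auto
  show "\<one>\<^bsub>thompsonG\<^esub> \<in> S" unfolding S_def using id_F by (auto intro!: exI[of _ 1])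
next
  fix f g assume f: "f \<in> S" and g: "g \<in> S"
  obtain e1 where e1: "e1 > 0" "\<forall>x\<in>{0..e1}. f x = x" "\<forall>x\<in>{1-e1..1}. f x = x" using f unfolding S_def by blast
  obtain e2 where e2: "e2 > 0" "\<forall>x\<in>{0..e2}. g x = x" "\<forall>x\<in>{1-e2..1}. g x = x" using g unfolding S_def by blast
  have F: "f \<circ> g \<in> thompsonF" using comp_F f g unfolding S_def by auto
  have "\<forall>x\<in>{0..min e1 e2}. (f \<circ> g) x = x" "\<forall>x\<in>{1 - min e1 e2..1}. (f \<circ> g) x = x"
    using e1 e2 by auto
  then show "f \<otimes>\<^bsub>thompsonG\<^esub> g \<in> S" unfolding S_def using F e1 e2
    by (auto intro!: exI[of _ "min e1 e2"])
next
  fix f assume f: "f \<in> S"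
  obtain e1 where e1: "e1 > 0" "\<forall>x\<in>{0..e1}. f x = x" "\<forall>x\<in>{1-e1..1}. f x = x" using f unfolding S_def by blast
  have fF: "f \<in> thompsonF" using f unfolding S_def by auto
  have "\<forall>x\<in>{0..e1}. finv f x = x" "\<forall>x\<in>{1-e1..1}. finv f x = x"
    using e1 finv_f[OF fF] by metis+
  then show "inv\<^bsub>thompsonG\<^esub> f \<in> S" unfolding S_def inv_G[OF fF] using finv_F[OF fF] e1
    by auto
qed

lemma comm_S: assumes a: "a \<in> thompsonF" and b: "b \<in> thompsonF"
  shows "a \<otimes>\<^bsub>thompsonG\<^esub> b \<otimes>\<^bsub>thompsonG\<^esub> inv\<^bsub>thompsonG\<^esub> a \<otimes>\<^bsub>thompsonG\<^esub> inv\<^bsub>thompsonG\<^esub> b \<in> S"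
proof -
  let ?c = "((a \<circ> b) \<circ> finv a) \<circ> finv b"
  have eq: "a \<otimes>\<^bsub>thompsonG\<^esub> b \<otimes>\<^bsub>thompsonG\<^esub> inv\<^bsub>thompsonG\<^esub> a \<otimes>\<^bsub>thompsonG\<^esub> inv\<^bsub>thompsonG\<^esub> b = ?c"
    using inv_G a b by simp
  have cF: "?c \<in> thompsonF" using comp_F finv_F a b by metis
  obtain k where k: "lin0 a k" using F_lin0[OF a] by blast
  obtain l where l: "lin0 b l" using F_lin0[OF b] by blast
  have "lin0 ?c (k + l + - k + - l)"
    using lin0_comp[OF lin0_comp[OF lin0_comp[OF k l] lin0_inv[OF k finv_f[OF a]]] lin0_inv[OF l finv_f[OF b]]] .
  then obtain e1 where e1: "e1 > 0" "\<forall>x\<in>{0..e1}. ?c x = x" unfolding lin0_def by auto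
  obtain k' where k': "lin1 a k'" using F_lin1[OF a] by blast
  obtain l' where l': "lin1 b l'" using F_lin1[OF b] by blast
  have "lin1 ?c (k' + l' + - k' + - l')"
    using lin1_comp[OF lin1_comp[OF lin1_comp[OF k' l'] lin1_inv[OF k' finv_f[OF a]]] lin1_inv[OF l' finv_f[OF b]]] .
  then obtain e2 where e2: "e2 > 0" "\<forall>x\<in>{1-e2..1}. ?c x = x" unfolding lin1_def by auto
  have "\<forall>x\<in>{0..min e1 e2}. ?c x = x" "\<forall>x\<in>{1 - min e1 e2..1}. ?c x = x" using e1 e2 by auto
  then have "?c \<in> S" unfolding S_def using cF e1 e2 by (auto intro!: exI[of _ "min e1 e2"])
  then show ?thesis using eq by simp
qed

lemma derived_S: "derived thompsonG (carrier thompsonG) \<subseteq> S"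
  unfolding derived_def
proof (rule group.generate_subgroup_incl[OF group_G _ S_subgroup])
  show "derived_set thompsonG (carrier thompsonG) \<subseteq> S"
    using comm_S by auto
qed



lemma pow_split: "real_of_int k \<le> real M \<Longrightarrow> 2 powr real_of_int k * 2 ^ nat (int M - k) = (2::real) ^ M"
proof -
  assume h: "real_of_int k \<le> real M"
  have "(2::real) ^ nat (int M - k) = 2 powr real (nat (int M - k))" by (simp add: powr_realpow)
  also have "real (nat (int M - k)) = real M - real_of_int k" using h by simp
  finally have e: "(2::real) ^ nat (int M - k) = 2 powr (real M - real_of_int k)" .
  have "2 powr real_of_int k * 2 powr (real M - real_of_int k) = 2 powr (real_of_int k + (real M - real_of_int k))"
    by (rule powr_add[symmetric])
  also have "\<dots> = 2 powr real M" by simp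
  also have "\<dots> = 2 ^ M" by (simp add: powr_realpow)
  finally have "2 powr real_of_int k * 2 powr (real M - real_of_int k) = 2 ^ M" .
  then show ?thesis using e by simp
qed

definition good :: "(real \<Rightarrow> real) \<Rightarrow> nat \<Rightarrow> nat \<Rightarrow> bool" where
  "good f M i \<longleftrightarrow> (\<exists>m a. a < (2::nat) ^ m \<and>
     (\<forall>x\<in>{real i / 2 ^ M .. real (Suc i) / 2 ^ M}. f x = (real a + (x * 2 ^ M - real i)) / 2 ^ m))"

lemma good_from_aff:
  assumes f: "f \<in> thompsonF" and i: "i < (2::nat) ^ M"
    and kc: "\<forall>x\<in>{real i / 2 ^ M .. real (Suc i) / 2 ^ M}. f x = 2 powr real_of_int k * x + c"
    and kM: "real_of_int k \<le> real M"
    and z: "f (real i / 2 ^ M) * 2 ^ nat (int M - k) = real_of_int z"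
  shows "good f M i"
proof -
  define m where "m = nat (int M - k)"
  define P where "P = 2 powr real_of_int k"
  define Q where "Q = (2::real) ^ m"
  have PQ: "P * Q = 2 ^ M" unfolding P_def Q_def m_def using pow_split[OF kM] .
  have Qpos: "Q > 0" unfolding Q_def by simp
  have ir: "real i / 2 ^ M \<in> {0..1}" using i by (auto simp: field_simps)
  have i1: "real (Suc i) \<le> 2 ^ M" using i by (metis Suc_leI of_nat_le_iff of_nat_numeral of_nat_power)
  have ir': "real (Suc i) / 2 ^ M \<in> {0..1}" using i1 by auto
  have c1: "real i / 2 ^ M \<in> {real i / 2 ^ M .. real (Suc i) / 2 ^ M}" by (auto simp: divide_right_mono)
  have c2: "real (Suc i) / 2 ^ M \<in> {real i / 2 ^ M .. real (Suc i) / 2 ^ M}" by (auto simp: divide_right_mono)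
  have z0: "z \<ge> 0"
  proof -
    have "f (real i / 2 ^ M) \<ge> 0" using F_range[OF f ir] by simp
    then have "real_of_int z \<ge> 0" using z[symmetric] by simp
    then show ?thesis by simp
  qed
  have step: "f (real (Suc i) / 2 ^ M) * Q = real_of_int z + 1"
  proof -
    have "f (real (Suc i) / 2 ^ M) = f (real i / 2 ^ M) + P / 2 ^ M"
      using kc c1 c2 unfolding P_def by (simp add: field_simps)
    then have "f (real (Suc i) / 2 ^ M) * Q = f (real i / 2 ^ M) * Q + P * Q / 2 ^ M"
      by (simp add: algebra_simps)
    then show ?thesis using PQ z unfolding Q_def m_def by simp
  qed
  have "f (real (Suc i) / 2 ^ M) \<le> 1" using F_range[OF f ir'] by simp
  then have "f (real (Suc i) / 2 ^ M) * Q \<le> 1 * Q" using Qpos by (intro mult_right_mono) auto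
  then have "real_of_int z + 1 \<le> Q" using step by linarith
  then have "real_of_int (z + 1) \<le> real_of_int (2 ^ m)" unfolding Q_def by simp
  then have "z + 1 \<le> 2 ^ m" by (simp only: of_int_le_iff)
  then have a: "nat z < 2 ^ m" using z0 by (simp add: nat_less_iff)
  have X: "\<forall>x\<in>{real i / 2 ^ M .. real (Suc i) / 2 ^ M}. f x = (real (nat z) + (x * 2 ^ M - real i)) / 2 ^ m"
  proof
    fix x assume x: "x \<in> {real i / 2 ^ M .. real (Suc i) / 2 ^ M}"
    have fx: "f x = f (real i / 2 ^ M) + P * (x - real i / 2 ^ M)"
      using kc x c1 unfolding P_def by (simp add: algebra_simps)
    have "f x * Q = (f (real i / 2 ^ M) + P * (x - real i / 2 ^ M)) * Q"
      by (simp only: fx)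
    also have "\<dots> = f (real i / 2 ^ M) * Q + P * Q * (x - real i / 2 ^ M)"
      by (simp add: algebra_simps)
    also have "\<dots> = real_of_int z + (x * 2 ^ M - real i)"
      using PQ z unfolding Q_def m_def by (simp add: algebra_simps)
    finally have "f x * Q = real (nat z) + (x * 2 ^ M - real i)" using z0 by simp
    then show "f x = (real (nat z) + (x * 2 ^ M - real i)) / 2 ^ m"
      using Qpos unfolding Q_def by (simp add: field_simps)
  qed
  show ?thesis unfolding good_def using a X by blast
qed

lemma grid_mono: fixes B :: "real set" assumes G: "\<forall>b\<in>B. \<exists>j::int. b * 2^N = j" and NM: "N \<le> M"
  shows "\<forall>b\<in>B. \<exists>j::int. b * 2^M = j"
proof
  fix b assume "b \<in> B"
  then obtain j :: int where j: "b * 2^N = j" using G by auto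
  have e: "(2::real)^M = 2^N * 2^(M-N)" using NM by (simp add: power_add[symmetric])
  have "b * 2^M = real_of_int (j * 2^(M-N))" using j by (simp add: e mult.assoc[symmetric])
  then show "\<exists>j::int. b * 2^M = j" by blast
qed

lemma grid_good: assumes f: "f \<in> thompsonF"
  shows "\<forall>\<^sub>F M in sequentially. \<forall>i<2^M. good f M i"
proof -
  obtain B where B: "pls f B" using F_pls[OF f] by metis
  have fin: "finite B" and D: "\<forall>b\<in>B. dyadic b" using B unfolding pls_def by auto
  obtain N where N: "\<forall>b\<in>B. \<exists>j::int. b * 2^N = j"
    using eventually_happens'[OF _ grid_exists[OF fin D]] by auto
  have perj: "\<forall>\<^sub>F M in sequentially. \<forall>i<2^M. (real j / 2^N \<le> real i / 2^M \<and> real (Suc i) / 2^M \<le> real (Suc j) / 2^N) \<longrightarrow> good f M i"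
    if j: "j \<in> {..<(2::nat)^N}" for j
  proof -
    have jN: "j < 2^N" using j by simp
    obtain k c where kc: "\<forall>z\<in>{real j / 2^N .. real (Suc j) / 2^N}. f z = 2 powr real_of_int k * z + c"
      using cell_aff[OF B N jN] unfolding affp_def by metis
    have jr: "real j / 2 ^ N \<in> {0..1}" using jN by (auto simp: field_simps)
      obtain n where n: "\<forall>m\<ge>n. \<exists>z::int. f (real j / 2^N) * 2^m = z"
      using dyadic_scale[OF grid_dyadic[OF f B N, of j]] jN by auto
    have "\<forall>\<^sub>F M in sequentially. M \<ge> N + nat (k + int n)" by (rule eventually_ge_at_top)
    then show ?thesis
    proof (rule eventually_mono, intro allI impI)
      fix M i assume M: "M \<ge> N + nat (k + int n)" and i: "i < (2::nat)^M"
        and sub: "real j / 2^N \<le> real i / 2^M \<and> real (Suc i) / 2^M \<le> real (Suc j) / 2^N"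
      have kM: "real_of_int k \<le> real M" using M by linarith
      have mn: "nat (int M - k) \<ge> n" using M by linarith
      obtain zz :: int where zz: "f (real j / 2^N) * 2 ^ nat (int M - k) = zz" using n mn by blast
      have kc': "\<forall>x\<in>{real i / 2 ^ M .. real (Suc i) / 2 ^ M}. f x = 2 powr real_of_int k * x + c"
        using kc sub by auto
      define m where "m = nat (int M - k)"
      have PQ: "2 powr real_of_int k * 2 ^ m = (2::real) ^ M" unfolding m_def by (rule pow_split[OF kM])
      have eMN: "(2::real)^M = 2^N * 2^(M-N)" using M by (simp add: power_add[symmetric])
      have c1: "real i / 2 ^ M \<in> {real i / 2 ^ M .. real (Suc i) / 2 ^ M}" by (auto simp: divide_right_mono)
      have cj: "real j / 2 ^ N \<in> {real j / 2^N .. real (Suc j) / 2^N}" by (auto simp: divide_right_mono)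
      have "f (real i / 2 ^ M) * 2 ^ m = (2 powr real_of_int k * (real i / 2 ^ M) + c) * 2 ^ m"
        using kc' c1 by simp
      also have "\<dots> = real i + c * 2 ^ m" using PQ by (simp add: field_simps)
      also have "c = f (real j / 2^N) - 2 powr real_of_int k * (real j / 2^N)" using kc cj by simp
      also have "real i + (f (real j / 2^N) - 2 powr real_of_int k * (real j / 2^N)) * 2 ^ m
          = real i + real_of_int zz - real j * 2^(M-N)"
        using PQ zz eMN unfolding m_def by (simp add: field_simps)
      also have "\<dots> = real_of_int (int i + zz - int j * 2^(M-N))" by simp
      finally show "good f M i" by (rule good_from_aff[OF f i kc' kM, unfolded m_def[symmetric]])
    qed
  qed
  have all: "\<forall>\<^sub>F M in sequentially. \<forall>j\<in>{..<(2::nat)^N}. \<forall>i<2^M. (real j / 2^N \<le> real i / 2^M \<and> real (Suc i) / 2^M \<le> real (Suc j) / 2^N) \<longrightarrow> good f M i"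
    by (rule eventually_ball_finite[OF finite_lessThan]) (rule ballI, rule perj)
  have geN: "\<forall>\<^sub>F M in sequentially. M \<ge> N" by (rule eventually_ge_at_top)
  show ?thesis
    using eventually_conj[OF all geN]
  proof (rule eventually_mono, intro allI impI)
    fix M i assume H: "(\<forall>j\<in>{..<(2::nat)^N}. \<forall>i<2^M. (real j / 2^N \<le> real i / 2^M \<and> real (Suc i) / 2^M \<le> real (Suc j) / 2^N) \<longrightarrow> good f M i) \<and> N \<le> M"
      and i: "i < (2::nat) ^ M"
    define q where "q = (2::nat) ^ (M - N)"
    have qpos: "q > 0" unfolding q_def by simp
    have eM: "(2::nat)^M = 2^N * q" unfolding q_def using H by (simp add: power_add[symmetric])
    have eMr: "(2::real)^M = 2^N * real q" unfolding q_def using H by (simp add: power_add[symmetric])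
    define j where "j = i div q"
    have jN: "j < 2^N" unfolding j_def using i eM qpos by (simp add: div_less_iff_less_mult)
    have lo: "j * q \<le> i" unfolding j_def by simp
    have hi: "Suc i \<le> Suc j * q"
    proof -
      have "i mod q < q" using qpos by simp
      moreover have "i = j * q + i mod q" unfolding j_def by simp
      ultimately show ?thesis by simp
    qed
    have ej: "real j / 2^N = real (j * q) / 2^M" using eMr qpos by (simp add: field_simps)
    have eSj: "real (Suc j) / 2^N = real (Suc j * q) / 2^M" using eMr qpos by (simp add: field_simps)
    have lo': "real (j * q) \<le> real i" using lo by (simp only: of_nat_le_iff)
    have "real j / 2^N \<le> real i / 2^M" unfolding ej by (rule divide_right_mono[OF lo']) simp
    moreover have "real (Suc i) / 2^M \<le> real (Suc j) / 2^N" unfolding eSj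
      by (rule divide_right_mono) (use hi in \<open>simp only: of_nat_le_iff\<close>, simp)
    moreover have "\<forall>i<2^M. (real j / 2^N \<le> real i / 2^M \<and> real (Suc i) / 2^M \<le> real (Suc j) / 2^N) \<longrightarrow> good f M i"
      using bspec[OF conjunct1[OF H], of j] jN by simp
    ultimately show "good f M i" using i by simp
  qed
qed



lemma S_Cl:
  assumes sub: "subgroup H thompsonG"
    and h1: "\<And>r::nat. r \<ge> 1 \<Longrightarrow> sim H (replicate r True @ [False]) [True, False]"
    and h2: "\<And>s::nat. s \<ge> 1 \<Longrightarrow> sim H (replicate s False @ [True]) [False, True]"
    and h3: "sim H [False, True] [True, False]"
    and h4: "sim H [True, False] [False, True, False]"
    and h5: "sim H [False, True, False] [False, True, True]"
    and fS: "f \<in> S"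
  shows "f \<in> Cl H"
proof -
  have f: "f \<in> thompsonF" using fS unfolding S_def by simp
  obtain \<epsilon> where e: "\<epsilon> > 0" "\<forall>x\<in>{0..\<epsilon>}. f x = x" "\<forall>x\<in>{1-\<epsilon>..1}. f x = x"
    using fS unfolding S_def by blast
  have "(\<lambda>M. (1/2::real)^M) \<longlonglongrightarrow> 0" by (rule LIMSEQ_realpow_zero) auto
  then have ev: "\<forall>\<^sub>F M in sequentially. (1/2::real)^M < \<epsilon>" using e(1) by (rule order_tendstoD(2))
  obtain M where gd: "\<forall>i<2^M. good f M i" and Me: "(1/2::real)^M < \<epsilon>"
    using eventually_happens'[OF _ eventually_conj[OF grid_good[OF f] ev]] by auto
  have Me': "1 / 2 ^ M < \<epsilon>" using Me by (simp add: power_one_over)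
  define as where "as = map (\<lambda>i. real i / 2 ^ M) [0..<Suc (2 ^ M)]"
  have len: "length as = Suc (2 ^ M)" unfolding as_def by simp
  have nth: "\<And>i. i < Suc (2 ^ M) \<Longrightarrow> as ! i = real i / 2 ^ M" unfolding as_def
    by (simp del: upt_Suc)
  have sorted: "sorted_wrt (<) as"
    unfolding sorted_wrt_iff_nth_less len
    by (auto simp: nth divide_strict_right_mono)
  have ne: "as \<noteq> []" using len by auto
  have hd: "hd as = 0" using nth[of 0] hd_conv_nth[OF ne] by simp
  have last: "last as = 1" using nth[of "2^M"] last_conv_nth[OF ne] len by simp
  have pieces: "\<exists>h\<in>H. \<forall>x\<in>{as ! i .. as ! Suc i}. f x = h x" if iL: "Suc i < length as" for i
  proof -
    have i: "i < 2 ^ M" using iL len by simp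
    have ai: "as ! i = real i / 2 ^ M" and aSi: "as ! Suc i = real (Suc i) / 2 ^ M"
      using nth iL len by auto
    consider "i = 0" | "i = 2 ^ M - 1" | "0 < i \<and> i < 2 ^ M - 1" using i by linarith
    then show ?thesis
    proof cases
      case 1
      have "as ! i = 0" "as ! Suc i = 1 / 2 ^ M" using ai aSi 1 by simp_all
      then have "\<forall>x\<in>{as ! i .. as ! Suc i}. f x = id x"
        using e(2) Me' by auto
      then show ?thesis using H_id[OF sub] by blast
    next
      case 2
      have "real (Suc i) = 2 ^ M" using 2 by (simp add: of_nat_diff)
      then have "as ! Suc i = 1" unfolding aSi by simp
      moreover have "real i = 2 ^ M - 1" using 2 by (simp add: of_nat_diff)
      then have "as ! i = 1 - 1 / 2 ^ M" unfolding ai by (simp add: field_simps)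
      ultimately have "\<forall>x\<in>{as ! i .. as ! Suc i}. f x = id x"
        using e(3) Me' by auto
      then show ?thesis using H_id[OF sub] by blast
    next
      case 3
      obtain m a where a: "a < (2::nat) ^ m"
        and fa: "\<forall>x\<in>{real i / 2 ^ M .. real (Suc i) / 2 ^ M}. f x = (real a + (x * 2 ^ M - real i)) / 2 ^ m"
        using gd i unfolding good_def by blast
      have c1: "real i / 2 ^ M \<in> {real i / 2 ^ M .. real (Suc i) / 2 ^ M}" by (auto simp: divide_right_mono)
      have c2: "real (Suc i) / 2 ^ M \<in> {real i / 2 ^ M .. real (Suc i) / 2 ^ M}" by (auto simp: divide_right_mono)
      have "f (real i / 2 ^ M) = (real a + (real i / 2 ^ M * 2 ^ M - real i)) / 2 ^ m"
        using fa c1 by blast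
      then have f1: "f (real i / 2 ^ M) = real a / 2 ^ m" by simp
      have "f (real (Suc i) / 2 ^ M) = (real a + (real (Suc i) / 2 ^ M * 2 ^ M - real i)) / 2 ^ m"
        using fa c2 by blast
      then have f2: "f (real (Suc i) / 2 ^ M) = (real a + 1) / 2 ^ m" by simp
      have Mpos: "(1::real) / 2 ^ M \<le> 1" by simp
      have "f (1 / 2 ^ M) = 1 / 2 ^ M" using e(2) Me' by simp
      moreover have "f (1 / 2 ^ M) \<le> f (real i / 2 ^ M)"
      proof (rule F_mono[OF f])
        show "1 / 2 ^ M \<le> real i / 2 ^ M" using 3 by (simp add: divide_right_mono)
        have "real i \<le> 2 ^ M" using i by (metis less_imp_le of_nat_le_iff of_nat_numeral of_nat_power)
        then show "real i / 2 ^ M \<le> 1" by simp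
      qed simp
      moreover have "(0::real) < 1 / 2 ^ M" by simp
      ultimately have "real a / 2 ^ m > 0" using f1 by linarith
      then have a0: "0 < a" by (simp add: zero_less_divide_iff)
      have iM: "Suc i \<le> 2 ^ M - 1" using 3 by simp
      then have "real (Suc i) \<le> real (2 ^ M - 1 :: nat)" by (simp only: of_nat_le_iff)
      moreover have "real (2 ^ M - 1 :: nat) = 2 ^ M - 1" by (simp add: of_nat_diff)
      ultimately have "real (Suc i) \<le> 2 ^ M - 1" by simp
      then have "real (Suc i) / 2 ^ M \<le> (2 ^ M - 1) / 2 ^ M" by (rule divide_right_mono) simp
      also have "(2 ^ M - 1) / 2 ^ M = 1 - 1 / (2::real) ^ M" by (simp add: diff_divide_distrib)
      finally have le1: "real (Suc i) / 2 ^ M \<le> 1 - 1 / 2 ^ M" .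
      have "f (1 - 1 / 2 ^ M) = 1 - 1 / 2 ^ M" using e(3) Me' by simp
      moreover have "f (real (Suc i) / 2 ^ M) \<le> f (1 - 1 / 2 ^ M)"
        by (rule F_mono[OF f _ le1]) auto
      moreover have "(0::real) < 1 / 2 ^ M" by simp
      ultimately have "(real a + 1) / 2 ^ m < 1" using f2 by linarith
      then have "real (a + 1) < real (2 ^ m)" by simp
      then have "a + 1 < 2 ^ m" by (simp only: of_nat_less_iff)
      then have a1: "a < 2 ^ m - 1" by simp
      have i0: "0 < i" and i1: "i < 2 ^ M - 1" using 3 by auto
      have s1: "sim H (nw M i) [False, True]"
        by (rule sim_mixed[OF sub h1 h2 h3 h4 h5 nw_mixed(1)[OF i0 i1] nw_mixed(2)[OF i0 i1]])
      have s2: "sim H (nw m a) [False, True]"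
        by (rule sim_mixed[OF sub h1 h2 h3 h4 h5 nw_mixed(1)[OF a0 a1] nw_mixed(2)[OF a0 a1]])
      have "sim H (nw M i) (nw m a)" using sim_trans[OF sub s1 sim_sym[OF sub s2]] .
      then obtain h where h: "h \<in> H" "has_branches h (nw M i) (nw m a)" unfolding sim_def by blast
      have "\<forall>x\<in>{as ! i .. as ! Suc i}. f x = h x"
      proof
        fix x assume x: "x \<in> {as ! i .. as ! Suc i}"
        then have xc: "x \<in> {real i / 2 ^ M .. real (Suc i) / 2 ^ M}" unfolding ai aSi .
        obtain \<alpha> where xa: "x = word_val (prepend (nw M i) \<alpha>)" using cell_word[OF i xc] by blast
        have "x = real i / 2 ^ M + word_val \<alpha> / 2 ^ M" using xa wv_prepend val_nw[OF i] by simp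
        then have xw: "x * 2 ^ M - real i = word_val \<alpha>" by (simp add: field_simps)
        have "h x = word_val (prepend (nw m a) \<alpha>)" using h(2) xa unfolding has_branches_def by simp
        also have "\<dots> = real a / 2 ^ m + word_val \<alpha> / 2 ^ m" using wv_prepend val_nw[OF a] by simp
        also have "\<dots> = f x" using fa xc xw by (simp add: add_divide_distrib)
        finally show "f x = h x" by simp
      qed
      then show ?thesis using h(1) by blast
    qed
  qed
  have "length as \<ge> 2" using len by simp
  then show ?thesis unfolding Cl_def using f sorted hd last pieces by blast
qed

theorem lemma2p4:
  assumes sub: "subgroup H thompsonG"
    and h1: "\<And>r::nat. r \<ge> 1 \<Longrightarrow> sim H (replicate r True @ [False]) [True, False]"
    and h2: "\<And>s::nat. s \<ge> 1 \<Longrightarrow> sim H (replicate s False @ [True]) [False, True]"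
    and h3: "sim H [False, True] [True, False]"
    and h4: "sim H [True, False] [False, True, False]"
    and h5: "sim H [False, True, False] [False, True, True]"
  shows "derived thompsonG (carrier thompsonG) \<subseteq> Cl H"
  using derived_S S_Cl[OF sub h1 h2 h3 h4 h5] by blast


end
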